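(* Let $s>1$ be constant and $G\sim G_{n,p}$ with $p=\frac{\log n+\omega(n)}{n}$, $\omega(n)\to\infty$, $np=O(\log n)$. Consider the Birth-Death process on $G$ started with $X=\{v_0\}$, where $d(v_0)=o(np)$, and let $\omega=np/d(v_0)$. Then w.h.p. $v_0\in X$ throughout the first $\omega^{1/2}$ iterations.
   Context: Birth-Death process: $X\subseteq[n]$ is the mutant set (fitness $s$, others fitness 1); at each step a vertex $v$ is chosen with probability proportional to fitness and a uniformly random neighbor $u$ of $v$ takes the type of $v$. An iteration is a step in which $X$ changes. *)

theory Defs
  imports "HOL-Probability.Probability" "HOL-Library.Landau_Symbols"
begin

text \<open>Graphs on the vertex set {0..<n}: an edge indicator on pairs (i,j) with i<j<n.\<close>
type_synonym graph = "nat \<times> nat \<Rightarrow> bool"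

definition gnp :: "nat \<Rightarrow> real \<Rightarrow> graph pmf" where
  "gnp n p = Pi_pmf {(i,j). i < j \<and> j < n} False (\<lambda>_. bernoulli_pmf p)"

definition adj :: "graph \<Rightarrow> nat \<Rightarrow> nat \<Rightarrow> bool" where
  "adj E u v \<longleftrightarrow> u \<noteq> v \<and> E (min u v, max u v)"

definition nbrs :: "nat \<Rightarrow> graph \<Rightarrow> nat \<Rightarrow> nat set" where
  "nbrs n E v = {u. u < n \<and> adj E u v}"

definition deg :: "nat \<Rightarrow> graph \<Rightarrow> nat \<Rightarrow> nat" where
  "deg n E v = card (nbrs n E v)"

definition fitness :: "real \<Rightarrow> nat set \<Rightarrow> nat \<Rightarrow> real" where
  "fitness s X v = (if v \<in> X then s else 1)"

definition choose_vertex :: "nat \<Rightarrow> real \<Rightarrow> nat set \<Rightarrow> nat pmf" where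
  "choose_vertex n s X =
     embed_pmf (\<lambda>v. if v < n then fitness s X v / (\<Sum>w<n. fitness s X w) else 0)"

definition bd_step :: "nat \<Rightarrow> graph \<Rightarrow> real \<Rightarrow> nat set \<Rightarrow> nat set pmf" where
  "bd_step n E s X =
     bind_pmf (choose_vertex n s X) (\<lambda>v.
       if nbrs n E v = {} then return_pmf X
       else map_pmf (\<lambda>u. if v \<in> X then insert u X else X - {u}) (pmf_of_set (nbrs n E v)))"

fun bd_traj :: "nat \<Rightarrow> graph \<Rightarrow> real \<Rightarrow> nat set \<Rightarrow> nat \<Rightarrow> nat set list pmf" where
  "bd_traj n E s X0 0 = return_pmf [X0]"
| "bd_traj n E s X0 (Suc T) =
     bind_pmf (bd_traj n E s X0 T) (\<lambda>xs. map_pmf (\<lambda>Y. xs @ [Y]) (bd_step n E s (last xs)))"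

text \<open>Number of iterations (steps in which X changes) among steps 1..t of a trajectory.\<close>
definition iterations_upto :: "nat set list \<Rightarrow> nat \<Rightarrow> nat" where
  "iterations_upto xs t = card {i. 1 \<le> i \<and> i \<le> t \<and> xs ! i \<noteq> xs ! (i - 1)}"

text \<open>v is not in X at some time at which at most K iterations have happened, i.e. v fails
  to be in X throughout the first K iterations.\<close>
definition lost_within :: "nat set list \<Rightarrow> nat \<Rightarrow> real \<Rightarrow> bool" where
  "lost_within xs v K \<longleftrightarrow> (\<exists>t < length xs. real (iterations_upto xs t) \<le> K \<and> v \<notin> xs ! t)"

end

theory Submission
  imports Defs "HOL-Real_Asymp.Real_Asymp"
begin
lemma prob_bind_pmf:
  "measure_pmf.prob (bind_pmf M f) A = measure_pmf.expectation M (\<lambda>x. measure_pmf.prob (f x) A)"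
proof -
  have "ennreal (measure_pmf.prob (bind_pmf M f) A) = (\<integral>\<^sup>+x. ennreal (measure_pmf.prob (f x) A) \<partial>M)"
    using emeasure_bind_pmf[of M f A] by (simp add: measure_pmf.emeasure_eq_measure)
  also have "\<dots> = ennreal (measure_pmf.expectation M (\<lambda>x. measure_pmf.prob (f x) A))"
    by (intro nn_integral_eq_integral measure_pmf.integrable_const_bound[where B=1]) auto
  finally show ?thesis by (simp add: integral_nonneg)
qed

lemma fitness_pos: "s > 0 \<Longrightarrow> fitness s X v > 0"
  by (simp add: fitness_def)

lemma W_pos: "s > 0 \<Longrightarrow> n > 0 \<Longrightarrow> (\<Sum>w<n. fitness s X w) > 0"
  by (intro sum_pos) (auto simp: fitness_pos)

lemma pmf_choose:
  assumes "s > 0" "n > 0"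
  shows "pmf (choose_vertex n s X) v = (if v < n then fitness s X v / (\<Sum>w<n. fitness s X w) else 0)"
proof -
  let ?W = "\<Sum>w<n. fitness s X w"
  let ?f = "\<lambda>v. if v < n then fitness s X v / ?W else 0"
  have W: "?W > 0" using W_pos assms by blast
  have nn: "\<And>v. 0 \<le> ?f v" using W assms by (auto intro!: divide_nonneg_pos simp: fitness_pos less_imp_le)
  have "(\<integral>\<^sup>+x. ennreal (?f x) \<partial>count_space UNIV) = (\<Sum>x<n. ennreal (?f x))"
    by (intro nn_integral_count_space') auto
  also have "\<dots> = ennreal (\<Sum>x<n. ?f x)"
    using nn by (intro sum_ennreal) 
  also have "(\<Sum>x<n. ?f x) = (\<Sum>x<n. fitness s X x / ?W)" by simp
  also have "\<dots> = 1" using W by (simp add: sum_divide_distrib[symmetric])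
  finally have "(\<integral>\<^sup>+x. ennreal (?f x) \<partial>count_space UNIV) = 1" by simp
  then show ?thesis unfolding choose_vertex_def
    using pmf_embed_pmf[of ?f v] nn by blast
qed

definition inner where
  "inner n E X v = (if nbrs n E v = {} then return_pmf X
       else map_pmf (\<lambda>u. if v \<in> X then insert u X else X - {u}) (pmf_of_set (nbrs n E v)))"

lemma prob_step:
  assumes "s > 0" "n > 0"
  shows "measure_pmf.prob (bd_step n E s X) A =
     (\<Sum>v<n. fitness s X v / (\<Sum>w<n. fitness s X w) * measure_pmf.prob (inner n E X v) A)"
proof -
  have "measure_pmf.prob (bd_step n E s X) A =
     measure_pmf.expectation (choose_vertex n s X) (\<lambda>v. measure_pmf.prob (inner n E X v) A)"
    unfolding bd_step_def inner_def[abs_def] by (rule prob_bind_pmf)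
  also have "\<dots> = (\<Sum>v<n. measure_pmf.prob (inner n E X v) A * pmf (choose_vertex n s X) v)"
    by (intro integral_measure_pmf_real) (auto simp: set_pmf_eq pmf_choose assms split: if_splits)
  also have "\<dots> = (\<Sum>v<n. fitness s X v / (\<Sum>w<n. fitness s X w) * measure_pmf.prob (inner n E X v) A)"
    by (intro sum.cong) (auto simp: pmf_choose assms)
  finally show ?thesis .
qed

lemma adj_sym: "adj E u v = adj E v u"
  by (auto simp: adj_def min.commute max.commute)

lemma nbrs_sym: "u < n \<Longrightarrow> v < n \<Longrightarrow> u \<in> nbrs n E v \<longleftrightarrow> v \<in> nbrs n E u"
  by (auto simp: nbrs_def adj_sym)

lemma finite_nbrs[simp]: "finite (nbrs n E v)"
  by (auto simp: nbrs_def)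

lemma death_inner:
  assumes "v0 \<in> X" "v0 < n" "v < n"
  shows "measure_pmf.prob (inner n E X v) {Y. v0 \<notin> Y} =
     (if v \<notin> X \<and> v \<in> nbrs n E v0 then 1 / real (deg n E v) else 0)"
proof (cases "nbrs n E v = {}")
  case True
  then have "v \<notin> nbrs n E v0" using nbrs_sym[OF assms(3,2)] assms by auto
  then show ?thesis using True assms by (simp add: inner_def)
next
  case False
  have fin: "finite (nbrs n E v)" by simp
  show ?thesis
  proof (cases "v \<in> X")
    case True
    then show ?thesis using False assms
      by (simp add: inner_def measure_pmf_of_set[OF False fin])
  next
    case vX: False
    have "measure_pmf.prob (inner n E X v) {Y. v0 \<notin> Y} =
       card (nbrs n E v \<inter> {u. v0 \<notin> X - {u}}) / card (nbrs n E v)"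
      using False vX by (simp add: inner_def measure_pmf_of_set[OF False fin] vimage_def)
    also have "nbrs n E v \<inter> {u. v0 \<notin> X - {u}} = nbrs n E v \<inter> {v0}" using assms by auto
    also have "card \<dots> = (if v \<in> nbrs n E v0 then 1 else 0)"
      using nbrs_sym[OF assms(3,2)] by auto
    finally show ?thesis using vX by (simp add: deg_def)
  qed
qed

lemma iter_inner_v0:
  assumes "v0 \<in> X" "nbrs n E v0 \<noteq> {}"
  shows "measure_pmf.prob (inner n E X v0) {Y. Y \<noteq> X} =
     card (nbrs n E v0 - X) / real (deg n E v0)"
proof -
  have "measure_pmf.prob (inner n E X v0) {Y. Y \<noteq> X} =
       card (nbrs n E v0 \<inter> {u. insert u X \<noteq> X}) / card (nbrs n E v0)"
    using assms by (simp add: inner_def measure_pmf_of_set vimage_def)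
  also have "nbrs n E v0 \<inter> {u. insert u X \<noteq> X} = nbrs n E v0 - X" by auto
  finally show ?thesis by (simp add: deg_def)
qed

lemma step_ratio:
  assumes s: "s > 0" and v0: "v0 \<in> X" "v0 < n" and D: "D > 0"
    and Dn: "\<And>u. u \<in> nbrs n E v0 \<Longrightarrow> real (deg n E u) \<ge> D"
  shows "measure_pmf.prob (bd_step n E s X) {Y. v0 \<notin> Y}
     \<le> (real (deg n E v0) / (s * D)) * measure_pmf.prob (bd_step n E s X) {Y. Y \<noteq> X}"
proof -
  have n: "n > 0" using v0 by simp
  define W where "W = (\<Sum>w<n. fitness s X w)"
  have W: "W > 0" unfolding W_def using W_pos s n by blast
  let ?N = "nbrs n E v0"
  have Nsub: "?N - X \<subseteq> {..<n}" by (auto simp: nbrs_def)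
  have "measure_pmf.prob (bd_step n E s X) {Y. v0 \<notin> Y} =
      (\<Sum>v<n. fitness s X v / W * (if v \<notin> X \<and> v \<in> ?N then 1 / real (deg n E v) else 0))"
    unfolding prob_step[OF s n] W_def[symmetric]
    by (intro sum.cong refl) (simp add: death_inner v0)
  also have "\<dots> \<le> (\<Sum>v<n. (if v \<in> ?N - X then 1 / (W * D) else 0))"
  proof (intro sum_mono)
    fix v assume "v \<in> {..<n}"
    show "fitness s X v / W * (if v \<notin> X \<and> v \<in> ?N then 1 / real (deg n E v) else 0)
        \<le> (if v \<in> ?N - X then 1 / (W * D) else 0)"
    proof (cases "v \<notin> X \<and> v \<in> ?N")
      case True
      then have "real (deg n E v) \<ge> D" using Dn by auto
      then have "W * D \<le> W * real (deg n E v)" using W by simp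
      then have "1 / (W * real (deg n E v)) \<le> 1 / (W * D)" using D W by (intro divide_left_mono) auto
      then show ?thesis using True W by (simp add: fitness_def)
    qed auto
  qed
  also have "\<dots> = card (?N - X) / (W * D)"
  proof -
    have "{..<n} \<inter> {v \<in> ?N. v \<notin> X} = ?N - X" using Nsub by auto
    then show ?thesis by (simp add: sum.If_cases)
  qed
  finally have death: "measure_pmf.prob (bd_step n E s X) {Y. v0 \<notin> Y} \<le> card (?N - X) / (W * D)" .
  show ?thesis
  proof (cases "?N = {}")
    case True
    then show ?thesis using death by (simp add: deg_def)
  next
    case False
    have dpos: "real (deg n E v0) > 0" using False by (simp add: deg_def card_gt_0_iff)
    have "fitness s X v0 / W * measure_pmf.prob (inner n E X v0) {Y. Y \<noteq> X}
        \<le> (\<Sum>v<n. fitness s X v / W * measure_pmf.prob (inner n E X v) {Y. Y \<noteq> X})"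
      using v0 W s by (intro member_le_sum) (auto intro!: mult_nonneg_nonneg divide_nonneg_pos simp: fitness_def)
    also have "\<dots> = measure_pmf.prob (bd_step n E s X) {Y. Y \<noteq> X}"
      unfolding prob_step[OF s n] W_def ..
    finally have it: "s / W * (card (?N - X) / real (deg n E v0)) \<le> measure_pmf.prob (bd_step n E s X) {Y. Y \<noteq> X}"
      using iter_inner_v0[OF v0(1) False] v0 by (simp add: fitness_def)
    have "card (?N - X) / (W * D) = (real (deg n E v0) / (s * D)) * (s / W * (card (?N - X) / real (deg n E v0)))"
      using dpos s D W by (simp add: field_simps)
    also have "\<dots> \<le> (real (deg n E v0) / (s * D)) * measure_pmf.prob (bd_step n E s X) {Y. Y \<noteq> X}"
      using it dpos s D by (intro mult_left_mono) auto
    finally show ?thesis using death by linarith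
  qed
qed

lemma traj_set: "ys \<in> set_pmf (bd_traj n E s Y T) \<Longrightarrow> length ys = Suc T \<and> hd ys = Y"
proof (induction T arbitrary: ys)
  case 0 then show ?case by simp
next
  case (Suc T)
  then obtain xs Z where "xs \<in> set_pmf (bd_traj n E s Y T)" "ys = xs @ [Z]" by auto
  with Suc.IH[of xs] show ?case by (cases xs) auto
qed

lemma traj_Suc':
  "bd_traj n E s X (Suc T) = bind_pmf (bd_step n E s X) (\<lambda>Y. map_pmf (\<lambda>ys. X # ys) (bd_traj n E s Y T))"
proof (induction T arbitrary: X)
  case 0
  then show ?case by (simp add: map_pmf_def bind_return_pmf bind_return_pmf')
next
  case (Suc T)
  have "bd_traj n E s X (Suc (Suc T)) =
     bind_pmf (bd_traj n E s X (Suc T)) (\<lambda>xs. map_pmf (\<lambda>Y. xs @ [Y]) (bd_step n E s (last xs)))" by simp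
  also have "\<dots> = bind_pmf (bd_step n E s X) (\<lambda>Y. bind_pmf (map_pmf (\<lambda>ys. X # ys) (bd_traj n E s Y T))
        (\<lambda>xs. map_pmf (\<lambda>Z. xs @ [Z]) (bd_step n E s (last xs))))"
    unfolding Suc.IH by (simp add: bind_assoc_pmf)
  also have "\<dots> = bind_pmf (bd_step n E s X) (\<lambda>Y. map_pmf (\<lambda>ys. X # ys) (bind_pmf (bd_traj n E s Y T)
        (\<lambda>xs. map_pmf (\<lambda>Z. xs @ [Z]) (bd_step n E s (last xs)))))"
  proof (intro bind_pmf_cong refl)
    fix Y
    show "bind_pmf (map_pmf (\<lambda>ys. X # ys) (bd_traj n E s Y T))
        (\<lambda>xs. map_pmf (\<lambda>Z. xs @ [Z]) (bd_step n E s (last xs))) =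
      map_pmf (\<lambda>ys. X # ys) (bind_pmf (bd_traj n E s Y T)
        (\<lambda>xs. map_pmf (\<lambda>Z. xs @ [Z]) (bd_step n E s (last xs))))"
      unfolding bind_map_pmf map_bind_pmf
    proof (intro bind_pmf_cong refl)
      fix xs assume "xs \<in> set_pmf (bd_traj n E s Y T)"
      then have "xs \<noteq> []" using traj_set by fastforce
      then show "map_pmf (\<lambda>Z. (X # xs) @ [Z]) (bd_step n E s (last (X # xs))) =
          map_pmf (\<lambda>ys. X # ys) (map_pmf (\<lambda>Z. xs @ [Z]) (bd_step n E s (last xs)))"
        by (simp add: pmf.map_comp o_def)
    qed
  qed
  also have "\<dots> = bind_pmf (bd_step n E s X) (\<lambda>Y. map_pmf (\<lambda>ys. X # ys) (bd_traj n E s Y (Suc T)))"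
    by simp
  finally show ?case .
qed

lemma iter_0[simp]: "iterations_upto xs 0 = 0"
  by (simp add: iterations_upto_def)

lemma iter_Cons:
  assumes "ys \<noteq> []"
  shows "iterations_upto (X # ys) (Suc t) = (if hd ys \<noteq> X then 1 else 0) + iterations_upto ys t"
proof -
  have eq: "{i. 1 \<le> i \<and> i \<le> Suc t \<and> (X # ys) ! i \<noteq> (X # ys) ! (i - 1)} =
     (if hd ys \<noteq> X then {1} else {}) \<union> Suc ` {i. 1 \<le> i \<and> i \<le> t \<and> ys ! i \<noteq> ys ! (i - 1)}"
  proof (intro set_eqI iffI)
    fix i assume i: "i \<in> {i. 1 \<le> i \<and> i \<le> Suc t \<and> (X # ys) ! i \<noteq> (X # ys) ! (i - 1)}"
    show "i \<in> (if hd ys \<noteq> X then {1} else {}) \<union> Suc ` {i. 1 \<le> i \<and> i \<le> t \<and> ys ! i \<noteq> ys ! (i - 1)}"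
    proof (cases "i = 1")
      case True then show ?thesis using i assms by (auto simp: hd_conv_nth)
    next
      case False
      then obtain j where j: "i = Suc (Suc j)" using i by (cases i; cases "i - 1") auto
      then show ?thesis using i by (auto intro!: image_eqI[of _ _ "Suc j"])
    qed
  next
    fix i assume "i \<in> (if hd ys \<noteq> X then {1} else {}) \<union> Suc ` {i. 1 \<le> i \<and> i \<le> t \<and> ys ! i \<noteq> ys ! (i - 1)}"
    then show "i \<in> {i. 1 \<le> i \<and> i \<le> Suc t \<and> (X # ys) ! i \<noteq> (X # ys) ! (i - 1)}"
      using assms by (auto simp: hd_conv_nth split: if_splits)
  qed
  have fin: "finite (Suc ` {i. 1 \<le> i \<and> i \<le> t \<and> ys ! i \<noteq> ys ! (i - 1)})" by simp
  show ?thesis unfolding iterations_upto_def eq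
    by (subst card_Un_disjoint) (auto simp: card_image)
qed

lemma lost_Cons:
  assumes "v \<in> X" "ys \<noteq> []"
  shows "lost_within (X # ys) v K \<longleftrightarrow> lost_within ys v (K - (if hd ys \<noteq> X then 1 else 0))"
proof
  assume "lost_within (X # ys) v K"
  then obtain t where t: "t < length (X # ys)" "real (iterations_upto (X # ys) t) \<le> K" "v \<notin> (X # ys) ! t"
    unfolding lost_within_def by blast
  then obtain t' where "t = Suc t'" using assms by (cases t) auto
  then show "lost_within ys v (K - (if hd ys \<noteq> X then 1 else 0))"
    using t iter_Cons[OF assms(2), of X t'] unfolding lost_within_def
    by (intro exI[of _ t']) (auto split: if_splits)
next
  assume "lost_within ys v (K - (if hd ys \<noteq> X then 1 else 0))"
  then obtain t where t: "t < length ys" "real (iterations_upto ys t) \<le> K - (if hd ys \<noteq> X then 1 else 0)" "v \<notin> ys ! t"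
    unfolding lost_within_def by blast
  then show "lost_within (X # ys) v K"
    using iter_Cons[OF assms(2), of X t] unfolding lost_within_def
    by (intro exI[of _ "Suc t"]) (auto split: if_splits)
qed

lemma lost_neg: "K < 0 \<Longrightarrow> \<not> lost_within ys v K"
  by (auto simp: lost_within_def)

lemma prob_traj_Suc:
  "measure_pmf.prob (bd_traj n E s X (Suc T)) A =
   measure_pmf.expectation (bd_step n E s X) (\<lambda>Y. measure_pmf.prob (bd_traj n E s Y T) {ys. X # ys \<in> A})"
  unfolding traj_Suc' prob_bind_pmf by (simp add: vimage_def)

lemma traj_bound:
  assumes s: "s > 0" and v0: "v0 < n" and D: "D > 0"
    and Dn: "\<And>u. u \<in> nbrs n E v0 \<Longrightarrow> real (deg n E u) \<ge> D"
  shows "v0 \<in> X \<Longrightarrow> measure_pmf.prob (bd_traj n E s X T) {ys. lost_within ys v0 K}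
           \<le> (real (deg n E v0) / (s * D)) * max 0 K"
proof (induction T arbitrary: X K)
  case 0
  then show ?case using s D by (auto simp: lost_within_def)
next
  case (Suc T)
  define r where "r = real (deg n E v0) / (s * D)"
  have r: "r \<ge> 0" unfolding r_def using s D by auto
  let ?M = "bd_step n E s X"
  let ?F = "\<lambda>Y. measure_pmf.prob (bd_traj n E s Y T) {ys. X # ys \<in> {ys. lost_within ys v0 K}}"
  have F: "?F Y = measure_pmf.prob (bd_traj n E s Y T) {ys. lost_within ys v0 (K - (if Y \<noteq> X then 1 else 0))}" for Y
  proof -
    have "?F Y = measure_pmf.prob (bd_traj n E s Y T) ({ys. lost_within (X # ys) v0 K} \<inter> set_pmf (bd_traj n E s Y T))"
      by (simp add: measure_Int_set_pmf)
    also have "{ys. lost_within (X # ys) v0 K} \<inter> set_pmf (bd_traj n E s Y T) =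
      {ys. lost_within ys v0 (K - (if Y \<noteq> X then 1 else 0))} \<inter> set_pmf (bd_traj n E s Y T)"
    proof -
      have "lost_within (X # ys) v0 K = lost_within ys v0 (K - (if Y \<noteq> X then 1 else 0))"
        if "ys \<in> set_pmf (bd_traj n E s Y T)" for ys
        using traj_set[OF that] lost_Cons[OF Suc.prems, of ys K] by (cases ys) auto
      then show ?thesis by blast
    qed
    also have "measure_pmf.prob (bd_traj n E s Y T) \<dots> = 
      measure_pmf.prob (bd_traj n E s Y T) {ys. lost_within ys v0 (K - (if Y \<noteq> X then 1 else 0))}"
      by (simp add: measure_Int_set_pmf)
    finally show ?thesis .
  qed
  have intF: "integrable ?M ?F" by (intro measure_pmf.integrable_const_bound[where B=1]) auto
  show ?case
  proof (cases "K < 1")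
    case True
    have "measure_pmf.expectation ?M ?F \<le> measure_pmf.expectation ?M (\<lambda>_. r * max 0 K)"
    proof (intro integral_mono intF)
      fix Y
      show "?F Y \<le> r * max 0 K"
      proof (cases "Y = X")
        case True
        then show ?thesis unfolding F using Suc.IH[OF Suc.prems, of K] r_def by simp
      next
        case False
        then show ?thesis unfolding F using \<open>K < 1\<close> lost_neg[of "K - 1"] r by simp
      qed
    qed simp
    then show ?thesis unfolding prob_traj_Suc r_def by simp
  next
    case False
    define b where "b = (\<lambda>Y. r * K - r * indicator {Y. Y \<noteq> X} Y + indicator {Y. v0 \<notin> Y} Y :: real)"
    have intb: "integrable ?M b" unfolding b_def
      by (intro measure_pmf.integrable_const_bound[where B="\<bar>r * K\<bar> + \<bar>r\<bar> + 1"])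
         (auto split: split_indicator)
    have "measure_pmf.expectation ?M ?F \<le> measure_pmf.expectation ?M b"
    proof (intro integral_mono intF intb)
      fix Y
      show "?F Y \<le> b Y"
      proof (cases "v0 \<in> Y")
        case vY: True
        show ?thesis
        proof (cases "Y = X")
          case True
          then show ?thesis unfolding F b_def using Suc.IH[OF Suc.prems, of K] r_def False Suc.prems by simp
        next
          case YX: False
          then show ?thesis unfolding F b_def using Suc.IH[OF vY, of "K - 1"] r_def False vY by (simp add: diff_divide_distrib right_diff_distrib)
        qed
      next
        case False
        then have "Y \<noteq> X" using Suc.prems by auto
        then show ?thesis unfolding b_def using False \<open>\<not> K < 1\<close> r
          by (auto intro!: order.trans[OF measure_pmf.prob_le_1] simp: mult_left_mono[of 1 K r, simplified])
      qed
    qed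
    also have "measure_pmf.expectation ?M b = r * K - r * measure_pmf.prob ?M {Y. Y \<noteq> X} + measure_pmf.prob ?M {Y. v0 \<notin> Y}"
    proof -
      have i1: "integrable ?M (indicator A :: _ \<Rightarrow> real)" for A
        by (rule measure_pmf.integrable_const_bound[where B=1]) (auto split: split_indicator)
      show ?thesis unfolding b_def
        by (simp add: Bochner_Integration.integral_add Bochner_Integration.integral_diff i1 measure_pmf.prob_space)
    qed
    also have "\<dots> \<le> r * K"
      using step_ratio[OF s Suc.prems v0 D Dn] unfolding r_def by simp
    finally show ?thesis unfolding prob_traj_Suc r_def using False by simp
  qed
qed

definition pe :: "nat \<Rightarrow> nat \<Rightarrow> nat \<times> nat" where "pe u w = (min u w, max u w)"

lemma pe_inj: "w \<noteq> u \<Longrightarrow> w' \<noteq> u \<Longrightarrow> pe u w = pe u w' \<Longrightarrow> w = w'"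
  by (auto simp: pe_def min_def max_def split: if_splits)

lemma pe_disj: "u \<noteq> v \<Longrightarrow> w \<notin> {u, v} \<Longrightarrow> w' \<notin> {u, v} \<Longrightarrow> pe u w \<noteq> pe v w'"
  by (auto simp: pe_def min_def max_def split: if_splits)

lemma adj_pe: "adj E w u \<longleftrightarrow> w \<noteq> u \<and> E (pe u w)"
  by (auto simp: adj_def pe_def min.commute max.commute)

lemma card_S:
  assumes "u < v" "v < n"
  shows "card (pe u ` ({..<n} - {u, v}) \<union> pe v ` ({..<n} - {u, v})) = 2 * (n - 2)"
proof -
  let ?W = "{..<n} - {u, v}"
  have cW: "card ?W = n - 2" using assms by (simp add: card_Diff_subset)
  have i1: "inj_on (pe u) ?W" by (intro inj_onI) (use pe_inj in blast)
  have i2: "inj_on (pe v) ?W" by (intro inj_onI) (use pe_inj in blast)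
  have d: "pe u ` ?W \<inter> pe v ` ?W = {}"
  proof -
    { fix w w' assume "w \<in> ?W" "w' \<in> ?W" "pe u w = pe v w'"
      then have False using pe_disj[of u v w w'] assms by auto }
    then show ?thesis by blast
  qed
  show ?thesis using card_Un_disjoint[OF _ _ d] card_image[OF i1] card_image[OF i2] cW by simp
qed

lemma count_S:
  assumes "u < v" "v < n" "E (u, v)"
  shows "card {e \<in> pe u ` ({..<n} - {u, v}) \<union> pe v ` ({..<n} - {u, v}). E e} + 2 = deg n E u + deg n E v"
proof -
  let ?W = "{..<n} - {u, v}"
  let ?A = "{w \<in> ?W. adj E w u}" and ?B = "{w \<in> ?W. adj E w v}"
  have eq: "{e \<in> pe u ` ?W \<union> pe v ` ?W. E e} = pe u ` ?A \<union> pe v ` ?B"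
    unfolding adj_pe by blast
  have i1: "inj_on (pe u) ?A" by (intro inj_onI) (use pe_inj in blast)
  have i2: "inj_on (pe v) ?B" by (intro inj_onI) (use pe_inj in blast)
  have d: "pe u ` ?A \<inter> pe v ` ?B = {}"
  proof -
    { fix w w' assume "w \<in> ?A" "w' \<in> ?B" "pe u w = pe v w'"
      then have False using pe_disj[of u v w w'] assms by auto }
    then show ?thesis by blast
  qed
  have c1: "card {e \<in> pe u ` ?W \<union> pe v ` ?W. E e} = card ?A + card ?B"
    unfolding eq using card_Un_disjoint[OF _ _ d] card_image[OF i1] card_image[OF i2] by simp
  have "nbrs n E u = insert v ?A" using assms by (auto simp: nbrs_def adj_def)
  then have du: "deg n E u = Suc (card ?A)" unfolding deg_def by simp
  have "nbrs n E v = insert u ?B" using assms by (auto simp: nbrs_def adj_def)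
  then have dv: "deg n E v = Suc (card ?B)" unfolding deg_def by simp
  show ?thesis using c1 du dv by simp
qed

lemma powr_ge1: "0 < (t::real) \<Longrightarrow> t \<le> 1 \<Longrightarrow> x \<le> 0 \<Longrightarrow> 1 \<le> t powr x"
proof -
  assume a: "0 < t" "t \<le> 1" "x \<le> 0"
  then have "ln t \<le> 0" by (subst ln_le_zero_iff) auto
  then have "0 \<le> x * ln t" using a by (intro mult_nonpos_nonpos) auto
  then show ?thesis using a by (simp add: powr_def)
qed

lemma pair_bound:
  assumes uv: "u < v" "v < n" and p: "0 \<le> p" "p \<le> 1" and t: "0 < t" "t \<le> 1"
  shows "measure_pmf.prob (gnp n p) {E. E (u, v) \<and> real (deg n E u + deg n E v) \<le> M}
      \<le> t powr (-M) * (p * t^2) * (1 - p + p * t) ^ (2 * (n - 2))"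
proof -
  define Ed where "Ed = {(i, j). i < j \<and> j < (n::nat)}"
  define S where "S = pe u ` ({..<n} - {u, v}) \<union> pe v ` ({..<n} - {u, v})"
  define f where "f = (\<lambda>e b. if e = (u, v) then (if b then t^2 else 0)
                      else if e \<in> S then (if b then t else 1) else (1::real))"
  define h where "h = (\<lambda>E. t powr (-M) * (\<Prod>e\<in>Ed. f e (E e)))"
  define A where "A = {E. E (u, v) \<and> real (deg n E u + deg n E v) \<le> M}"
  have finEd: "finite Ed" unfolding Ed_def by (rule finite_subset[of _ "{..<n} \<times> {..<n}"]) auto
  have SEd: "S \<subseteq> Ed" unfolding S_def Ed_def pe_def using uv by (auto simp: min_def max_def)
  have uvS: "(u, v) \<notin> S"
  proof
    assume "(u, v) \<in> S"
    moreover have "(u, v) = pe u v" "(u, v) = pe v u" using uv by (auto simp: pe_def)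
    ultimately show False unfolding S_def using pe_inj[of _ u v] pe_inj[of _ v u] uv by fastforce
  qed
  have uvEd: "(u, v) \<in> Ed" using uv unfolding Ed_def by auto
  have finS: "finite S" using finEd SEd finite_subset by blast
  have prod_eq: "(\<Prod>e\<in>Ed. g e) = g (u, v) * (\<Prod>e\<in>S. g e)"
    if "\<And>e. e \<in> Ed \<Longrightarrow> e \<notin> insert (u, v) S \<Longrightarrow> g e = 1" for g :: "_ \<Rightarrow> real"
  proof -
    have "(\<Prod>e\<in>Ed. g e) = (\<Prod>e\<in>insert (u, v) S. g e)"
      using that SEd uvEd finEd by (intro prod.mono_neutral_right) auto
    also have "\<dots> = g (u, v) * (\<Prod>e\<in>S. g e)" using uvS finS by simp
    finally show ?thesis .
  qed
  have hprod: "(\<Prod>e\<in>Ed. f e (E e)) = (if E (u, v) then t^2 else 0) * t ^ card {e \<in> S. E e}" for E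
  proof -
    have "(\<Prod>e\<in>Ed. f e (E e)) = f (u, v) (E (u, v)) * (\<Prod>e\<in>S. f e (E e))"
      by (rule prod_eq) (auto simp: f_def)
    also have "(\<Prod>e\<in>S. f e (E e)) = (\<Prod>e\<in>S. if E e then t else 1)"
      using uvS by (intro prod.cong) (auto simp: f_def)
    also have "\<dots> = t ^ card {e \<in> S. E e}"
    proof -
      have "(\<Prod>e\<in>S. if E e then t else 1) = (\<Prod>e\<in>S \<inter> {e. E e}. t) * (\<Prod>e\<in>S \<inter> - {e. E e}. 1)"
        by (rule prod.If_cases[OF finS])
      also have "\<dots> = t ^ card (S \<inter> {e. E e})" by simp
      also have "S \<inter> {e. E e} = {e \<in> S. E e}" by blast
      finally show ?thesis .
    qed
    finally show ?thesis by (simp add: f_def)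
  qed
  have hnn: "0 \<le> h E" for E unfolding h_def hprod using t by simp
  have ind: "indicator A E \<le> h E" for E
  proof (cases "E \<in> A")
    case True
    then have Euv: "E (u, v)" and dM: "real (deg n E u + deg n E v) \<le> M" unfolding A_def by auto
    have k: "card {e \<in> S. E e} + 2 = deg n E u + deg n E v"
      using count_S[of u v n E, OF uv Euv] unfolding S_def .
    have "h E = t powr (-M) * t ^ (card {e \<in> S. E e} + 2)"
      unfolding h_def hprod using Euv by (simp add: power_add power2_eq_square)
    also have "\<dots> = t powr (real (deg n E u + deg n E v) - M)"
      unfolding k using t by (simp add: powr_realpow[symmetric] powr_add[symmetric])
    also have "\<dots> \<ge> 1" using t dM by (intro powr_ge1) auto
    finally show ?thesis using True by simp
  qed (simp add: hnn)
  have inth: "integrable (gnp n p) h" unfolding h_def gnp_def Ed_def[symmetric]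
    by (intro integrable_mult_right integrable_prod_Pi_pmf finEd integrable_measure_pmf_finite) auto
  have "measure_pmf.prob (gnp n p) A = measure_pmf.expectation (gnp n p) (indicator A)" by simp
  also have "\<dots> \<le> measure_pmf.expectation (gnp n p) h"
    by (intro integral_mono inth ind measure_pmf.integrable_const_bound[where B=1]) (auto split: split_indicator)
  also have "\<dots> = t powr (-M) * (\<Prod>e\<in>Ed. measure_pmf.expectation (bernoulli_pmf p) (f e))"
    unfolding h_def gnp_def Ed_def[symmetric] integral_mult_right_zero
    by (subst expectation_prod_Pi_pmf[OF finEd]) (auto simp: f_def integrable_measure_pmf_finite t less_imp_le)
  also have "(\<Prod>e\<in>Ed. measure_pmf.expectation (bernoulli_pmf p) (f e)) = 
       measure_pmf.expectation (bernoulli_pmf p) (f (u, v)) * (\<Prod>e\<in>S. measure_pmf.expectation (bernoulli_pmf p) (f e))"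
    by (rule prod_eq) (auto simp: f_def)
  also have "(\<Prod>e\<in>S. measure_pmf.expectation (bernoulli_pmf p) (f e)) = (\<Prod>e\<in>S. 1 - p + p * t)"
    using uvS p by (intro prod.cong) (auto simp: f_def)
  also have "\<dots> = (1 - p + p * t) ^ (2 * (n - 2))" using card_S[OF uv] unfolding S_def by simp
  also have "measure_pmf.expectation (bernoulli_pmf p) (f (u, v)) = p * t^2" using p by (simp add: f_def)
  finally show ?thesis unfolding A_def by simp
qed

lemma bad_bound:
  assumes p: "0 \<le> p" "p \<le> 1" and t: "0 < t" "t \<le> 1"
  shows "measure_pmf.prob (gnp n p) {E. \<exists>u v. u < v \<and> v < n \<and> E (u, v) \<and> real (deg n E u + deg n E v) \<le> M}
      \<le> real n ^ 2 * (t powr (-M) * (p * t^2) * (1 - p + p * t) ^ (2 * (n - 2)))"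
proof -
  define P where "P = {(u, v). u < v \<and> v < (n::nat)}"
  define A where "A = (\<lambda>(u, v). {E. E (u, v) \<and> real (deg n E u + deg n E v) \<le> M})"
  have PS: "P \<subseteq> {..<n} \<times> {..<n}" unfolding P_def by auto
  have finP: "finite P" using PS finite_subset by blast
  have cP: "card P \<le> n ^ 2"
    using card_mono[OF _ PS] by (simp add: card_cartesian_product power2_eq_square)
  have eq: "{E. \<exists>u v. u < v \<and> v < n \<and> E (u, v) \<and> real (deg n E u + deg n E v) \<le> M} = (\<Union>i\<in>P. A i)"
    unfolding P_def A_def by auto
  have "measure_pmf.prob (gnp n p) (\<Union>i\<in>P. A i) \<le> (\<Sum>i\<in>P. measure_pmf.prob (gnp n p) (A i))"
    by (intro measure_pmf.finite_measure_subadditive_finite finP) auto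
  also have "\<dots> \<le> (\<Sum>i\<in>P. t powr (-M) * (p * t^2) * (1 - p + p * t) ^ (2 * (n - 2)))"
  proof (intro sum_mono)
    fix i assume "i \<in> P"
    then obtain u v where "i = (u, v)" "u < v" "v < n" unfolding P_def by auto
    then show "measure_pmf.prob (gnp n p) (A i) \<le> t powr (-M) * (p * t^2) * (1 - p + p * t) ^ (2 * (n - 2))"
      unfolding A_def using pair_bound[of u v n p t M] p t by simp
  qed
  also have "\<dots> = real (card P) * (t powr (-M) * (p * t^2) * (1 - p + p * t) ^ (2 * (n - 2)))" by simp
  also have "\<dots> \<le> real n ^ 2 * (t powr (-M) * (p * t^2) * (1 - p + p * t) ^ (2 * (n - 2)))"
    using cP p t by (intro mult_right_mono) (auto simp: of_nat_le_iff[symmetric] mult_nonneg_nonneg)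
  finally show ?thesis unfolding eq .
qed

lemma joint_bound:
  fixes s :: real and x :: real
  assumes s: "s > 0" and v0: "\<And>E. v0 E < n" and x: "x = real n * p" "x > 0"
    and gD: "g \<le> x / 40" and del: "40 / s * sqrt (g / x) \<le> \<delta>" "0 \<le> \<delta>"
  shows "measure_pmf.prob
             (bind_pmf (gnp n p) (\<lambda>E. map_pmf (\<lambda>xs. (E, xs)) (bd_traj n E s {v0 E} T)))
             {(E, xs). real (deg n E (v0 E)) \<le> g \<and>
                       lost_within xs (v0 E) (sqrt (real n * p / real (deg n E (v0 E))))}
       \<le> measure_pmf.prob (gnp n p) {E. \<exists>u v. u < v \<and> v < n \<and> E (u, v) \<and> real (deg n E u + deg n E v) \<le> x / 20}
         + \<delta>"
proof -
  define bad where "bad = {E. \<exists>u v. u < v \<and> v < n \<and> E (u, v) \<and> real (deg n E u + deg n E v) \<le> x / 20}"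
  define F where "F = (\<lambda>E. measure_pmf.prob (bd_traj n E s {v0 E} T)
      {xs. real (deg n E (v0 E)) \<le> g \<and> lost_within xs (v0 E) (sqrt (real n * p / real (deg n E (v0 E))))})"
  have lhs: "measure_pmf.prob
             (bind_pmf (gnp n p) (\<lambda>E. map_pmf (\<lambda>xs. (E, xs)) (bd_traj n E s {v0 E} T)))
             {(E, xs). real (deg n E (v0 E)) \<le> g \<and>
                       lost_within xs (v0 E) (sqrt (real n * p / real (deg n E (v0 E))))}
        = measure_pmf.expectation (gnp n p) F"
    unfolding prob_bind_pmf F_def by (simp add: vimage_def)
  have Fb: "F E \<le> indicator bad E + \<delta>" for E
  proof (cases "E \<in> bad")
    case True
    then show ?thesis unfolding F_def using del by (simp add: add_increasing2)
  next
    case nb: False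
    show ?thesis
    proof (cases "real (deg n E (v0 E)) \<le> g")
      case False
      then show ?thesis unfolding F_def using del nb by simp
    next
      case True
      define d where "d = deg n E (v0 E)"
      define D where "D = x / 40"
      have D: "D > 0" unfolding D_def using x by simp
      have dD: "real d \<le> D" using True gD unfolding d_def D_def by simp
      have Dn: "real (deg n E u) \<ge> D" if u: "u \<in> nbrs n E (v0 E)" for u
      proof -
        have un: "u < n" "adj E u (v0 E)" using u by (auto simp: nbrs_def)
        define a where "a = min u (v0 E)"
        define b where "b = max u (v0 E)"
        have ab: "a < b" "b < n" "E (a, b)" using un v0[of E] unfolding a_def b_def adj_def by auto
        have "deg n E a + deg n E b = deg n E u + d"
          unfolding a_def b_def d_def by (cases "u \<le> v0 E") (auto simp: min_def max_def)
        moreover have "\<not> real (deg n E a + deg n E b) \<le> x / 20" using nb ab unfolding bad_def by blast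
        ultimately show ?thesis using dD unfolding D_def by simp
      qed
      have tb: "measure_pmf.prob (bd_traj n E s {v0 E} T) {ys. lost_within ys (v0 E) (sqrt (x / real d))}
           \<le> (real d / (s * D)) * max 0 (sqrt (x / real d))"
        using traj_bound[OF s v0[of E] D Dn, of "{v0 E}" T "sqrt (x / real d)"] unfolding d_def by simp
      also have "\<dots> \<le> \<delta>"
      proof (cases "d = 0")
        case True then show ?thesis using del by simp
      next
        case False
        then have dp: "real d > 0" by simp
        have "(real d / (s * D)) * max 0 (sqrt (x / real d)) = 40 / s * (real d / x * sqrt (x / real d))"
          using dp x s unfolding D_def by (simp add: field_simps)
        also have "real d / x * sqrt (x / real d) = sqrt (real d / x)"
        proof -
          have "real d / x = sqrt (real d / x) * sqrt (real d / x)" using dp x by simp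
          moreover have "sqrt (x / real d) * sqrt (real d / x) = 1"
          proof -
            have "(x / real d) * (real d / x) = 1" using dp x(2) by simp
            then show ?thesis by (simp add: real_sqrt_mult[symmetric])
          qed
          ultimately show ?thesis by (metis mult.assoc mult.commute mult_1_right)
        qed
        also have "40 / s * sqrt (real d / x) \<le> 40 / s * sqrt (g / x)"
          using True s x unfolding d_def by (intro mult_left_mono real_sqrt_le_mono divide_right_mono) auto
        finally show ?thesis using del by simp
      qed
      finally show ?thesis unfolding F_def using True nb x(1) by (simp add: d_def)
    qed
  qed
  have "measure_pmf.expectation (gnp n p) F \<le> measure_pmf.expectation (gnp n p) (\<lambda>E. indicator bad E + \<delta>)"
  proof (rule integral_mono[OF _ _ Fb])
    show "integrable (measure_pmf (gnp n p)) F"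
      by (rule measure_pmf.integrable_const_bound[where B=1]) (auto simp: F_def)
    show "integrable (measure_pmf (gnp n p)) (\<lambda>E. indicator bad E + \<delta>)"
      by (rule measure_pmf.integrable_const_bound[where B="1 + \<delta>"]) (use del in \<open>auto split: split_indicator\<close>)
  qed
  also have "\<dots> = measure_pmf.prob (gnp n p) bad + \<delta>"
  proof -
    have i1: "integrable (gnp n p) (indicator bad :: _ \<Rightarrow> real)"
      by (rule measure_pmf.integrable_const_bound[where B=1]) (auto split: split_indicator)
    show ?thesis by (simp add: Bochner_Integration.integral_add i1 measure_pmf.prob_space)
  qed
  finally show ?thesis using lhs unfolding bad_def by simp
qed

lemma bad_numeric:
  fixes x p C :: real
  assumes n: "n \<ge> 2" and p: "0 \<le> p" "p \<le> 1" and x: "x = real n * p" "ln (real n) \<le> x" "x \<le> C * ln (real n)"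
  shows "real n ^ 2 * (exp (-2) powr (-(x / 20)) * (p * exp (-2) ^ 2) * (1 - p + p * exp (-2)) ^ (2 * (n - 2)))
     \<le> exp 3 * C * ln (real n) * real n powr (-7/30)"
proof -
  have np: "real n > 0" using n by simp
  have xnn: "x \<ge> 0" using x(1) p np by simp
  have h1: "exp (-2) powr (-(x / 20)) = exp (x / 10)" by (simp add: powr_def)
  have e2: "exp (-2::real) \<le> 1 / 3"
  proof -
    have "3 \<le> exp (2::real)" using exp_ge_add_one_self[of 2] by simp
    then show ?thesis by (simp add: exp_minus field_simps)
  qed
  have b0: "0 \<le> 1 - p + p * exp (-2)" using p by (simp add: add_nonneg_nonneg)
  have b1: "1 - p + p * exp (-2) \<le> exp (- (2 * p / 3))"
  proof -
    have "1 - p + p * exp (-2) \<le> 1 - p + p * (1/3)" using e2 p by (intro add_left_mono mult_left_mono) auto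
    also have "\<dots> = 1 + (- (2 * p / 3))" by simp
    also have "\<dots> \<le> exp (- (2 * p / 3))" by (rule exp_ge_add_one_self)
    finally show ?thesis .
  qed
  have h5: "(1 - p + p * exp (-2)) ^ (2 * (n - 2)) \<le> exp (- (4/3) * x + 3)"
  proof -
    have "(1 - p + p * exp (-2)) ^ (2 * (n - 2)) \<le> exp (- (2 * p / 3)) ^ (2 * (n - 2))"
      by (intro power_mono b0 b1)
    also have "\<dots> = exp (real (2 * (n - 2)) * (- (2 * p / 3)))" by (rule exp_of_nat_mult[symmetric])
    also have "real (2 * (n - 2)) * (- (2 * p / 3)) = - (4/3) * x + (8/3) * p"
      using n x(1) by (simp add: of_nat_diff algebra_simps)
    also have "exp (- (4/3) * x + (8/3) * p) \<le> exp (- (4/3) * x + 3)" using p by simp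
    finally show ?thesis .
  qed
  have h2: "p * exp (-2) ^ 2 \<le> p" using p by (simp add: mult_left_le power_le_one)
  have "real n ^ 2 * (exp (-2) powr (-(x / 20)) * (p * exp (-2) ^ 2) * (1 - p + p * exp (-2)) ^ (2 * (n - 2)))
      \<le> real n ^ 2 * (exp (x / 10) * p * exp (- (4/3) * x + 3))"
    unfolding h1 using h2 h5 b0 p
    by (intro mult_left_mono mult_mono) (auto simp: mult_nonneg_nonneg)
  also have "\<dots> = exp 3 * (real n * x * exp (- (37/30) * x))"
    using x(1) by (simp add: power2_eq_square exp_add[symmetric] mult_exp_exp algebra_simps)
  also have "\<dots> \<le> exp 3 * (real n * (C * ln (real n)) * exp (- (37/30) * ln (real n)))"
    using x np xnn by (intro mult_left_mono mult_mono) auto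
  also have "exp (- (37/30) * ln (real n)) = real n powr (-37/30)" using np by (simp add: powr_def)
  also have "real n * (C * ln (real n)) * real n powr (-37/30) = C * ln (real n) * (real n powr 1 * real n powr (-37/30))"
    using np by simp
  also have "real n powr 1 * real n powr (-37/30) = real n powr (-7/30)"
  proof -
    have "real n powr (-7/30) = real n powr (1 + (-37/30))" by simp
    also have "\<dots> = real n powr 1 * real n powr (-37/30)" by (rule powr_add)
    finally show ?thesis by simp
  qed
  finally show ?thesis by (simp add: mult.assoc)
qed

lemma lim1: "((\<lambda>n::nat. ln (real n) / real n) \<longlongrightarrow> 0) sequentially"
  by real_asymp

lemma lim2: "((\<lambda>n::nat. ln (real n) * real n powr (-7/30)) \<longlongrightarrow> 0) sequentially"
  by real_asymp

theorem mainTheorem12: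
  fixes s :: real and om :: "nat \<Rightarrow> real" and p :: "nat \<Rightarrow> real"
    and g :: "nat \<Rightarrow> real" and v0 :: "nat \<Rightarrow> graph \<Rightarrow> nat"
  assumes "s > 1"
    and "filterlim om at_top sequentially"
    and "\<forall>n. p n = (ln (real n) + om n) / real n"
    and "(\<lambda>n. real n * p n) \<in> O(\<lambda>n. ln (real n))"
    and "g \<in> o(\<lambda>n. real n * p n)"
    and "\<forall>n>0. \<forall>E. v0 n E < n"
  shows "\<forall>\<epsilon>>0. eventually (\<lambda>n. \<forall>T.
           measure_pmf.prob
             (bind_pmf (gnp n (p n)) (\<lambda>E. map_pmf (\<lambda>xs. (E, xs)) (bd_traj n E s {v0 n E} T)))
             {(E, xs). real (deg n E (v0 n E)) \<le> g n \<and>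
                       lost_within xs (v0 n E) (sqrt (real n * p n / real (deg n E (v0 n E))))}
           \<le> \<epsilon>) sequentially"
proof (intro allI impI)
  fix \<epsilon> :: real assume eps: "\<epsilon> > 0"
  have s: "s > 0" using assms(1) by simp
  obtain C where C: "C > 0" and ev1: "eventually (\<lambda>n. norm (real n * p n) \<le> C * norm (ln (real n))) sequentially"
    using landau_o.bigE[OF assms(4)] by blast
  have ev2: "eventually (\<lambda>n. om n \<ge> 0) sequentially"
    using assms(2) by (simp add: filterlim_at_top)
  have ev3: "eventually (\<lambda>n::nat. n \<ge> 3) sequentially" by (rule eventually_ge_at_top)
  define \<kappa> where "\<kappa> = min (1/40) ((\<epsilon> * s / 80)^2)"
  have \<kappa>: "\<kappa> > 0" unfolding \<kappa>_def using eps s by simp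
  have ev4: "eventually (\<lambda>n. norm (g n) \<le> \<kappa> * norm (real n * p n)) sequentially"
    using landau_o.smallD[OF assms(5) \<kappa>] by simp
  have ev5: "eventually (\<lambda>n::nat. ln (real n) / real n < 1 / C) sequentially"
    using order_tendstoD(2)[OF lim1] C by simp
  have ev6: "eventually (\<lambda>n::nat. ln (real n) * real n powr (-7/30) < \<epsilon> / (2 * exp 3 * C)) sequentially"
    using order_tendstoD(2)[OF lim2] C eps by simp
  show "eventually (\<lambda>n. \<forall>T.
           measure_pmf.prob
             (bind_pmf (gnp n (p n)) (\<lambda>E. map_pmf (\<lambda>xs. (E, xs)) (bd_traj n E s {v0 n E} T)))
             {(E, xs). real (deg n E (v0 n E)) \<le> g n \<and>
                       lost_within xs (v0 n E) (sqrt (real n * p n / real (deg n E (v0 n E))))}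
           \<le> \<epsilon>) sequentially"
    using ev1 ev2 ev3 ev4 ev5 ev6
  proof eventually_elim
    case (elim n)
    define x where "x = real n * p n"
    have np: "real n > 0" and n2: "n \<ge> 2" using elim by auto
    have ln1: "ln (real n) \<ge> 1"
    proof -
      have "exp 1 \<le> (3::real)" using exp_le by simp
      also have "3 \<le> real n" using elim by simp
      finally show ?thesis using np by (simp add: ln_ge_iff)
    qed
    have xe: "x = ln (real n) + om n" unfolding x_def using assms(3) np by simp
    have xl: "ln (real n) \<le> x" using xe elim by simp
    have xpos: "x > 0" using xl ln1 by simp
    have xC: "x \<le> C * ln (real n)" using elim(1) xpos ln1 unfolding x_def[symmetric] by simp
    have pdef: "p n = x / real n" unfolding x_def using np by simp
    have p0: "0 \<le> p n" using xpos np pdef by simp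
    have p1: "p n \<le> 1"
    proof -
      have "p n \<le> C * ln (real n) / real n" unfolding pdef using xC np by (simp add: divide_right_mono)
      also have "\<dots> = C * (ln (real n) / real n)" by simp
      also have "\<dots> \<le> C * (1 / C)" using elim(5) C by (intro mult_left_mono) auto
      finally show ?thesis using C by simp
    qed
    have gk: "g n \<le> \<kappa> * x" using elim(4) xpos unfolding x_def[symmetric] by simp
    have gD: "g n \<le> x / 40"
    proof -
      have "\<kappa> \<le> 1/40" unfolding \<kappa>_def by simp
      then have "\<kappa> * x \<le> (1/40) * x" using xpos by (intro mult_right_mono) auto
      then show ?thesis using gk by simp
    qed
    have del: "40 / s * sqrt (g n / x) \<le> \<epsilon> / 2"
    proof -
      have "g n / x \<le> \<kappa>" using gk xpos by (simp add: divide_le_eq mult.commute)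
      also have "\<kappa> \<le> (\<epsilon> * s / 80)^2" unfolding \<kappa>_def by simp
      finally have "sqrt (g n / x) \<le> \<epsilon> * s / 80"
        using eps s real_sqrt_le_mono by fastforce
      then have "40 / s * sqrt (g n / x) \<le> 40 / s * (\<epsilon> * s / 80)"
        using s by (intro mult_left_mono) auto
      also have "\<dots> = \<epsilon> / 2" using s by simp
      finally show ?thesis .
    qed
    have bad: "measure_pmf.prob (gnp n (p n)) {E. \<exists>u v. u < v \<and> v < n \<and> E (u, v) \<and> real (deg n E u + deg n E v) \<le> x / 20}
        \<le> \<epsilon> / 2"
    proof -
      have "measure_pmf.prob (gnp n (p n)) {E. \<exists>u v. u < v \<and> v < n \<and> E (u, v) \<and> real (deg n E u + deg n E v) \<le> x / 20}
         \<le> real n ^ 2 * (exp (-2) powr (-(x / 20)) * (p n * exp (-2) ^ 2) * (1 - p n + p n * exp (-2)) ^ (2 * (n - 2)))"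
        by (rule bad_bound) (use p0 p1 in auto)
      also have "\<dots> \<le> exp 3 * C * ln (real n) * real n powr (-7/30)"
        by (rule bad_numeric[OF n2 p0 p1 x_def xl xC])
      also have "\<dots> = (exp 3 * C) * (ln (real n) * real n powr (-7/30))" by simp
      also have "\<dots> \<le> (exp 3 * C) * (\<epsilon> / (2 * exp 3 * C))"
        using elim(6) C by (intro mult_left_mono) auto
      also have "\<dots> = \<epsilon> / 2" using C by simp
      finally show ?thesis .
    qed
    show ?case
    proof
      fix T
      have "measure_pmf.prob
             (bind_pmf (gnp n (p n)) (\<lambda>E. map_pmf (\<lambda>xs. (E, xs)) (bd_traj n E s {v0 n E} T)))
             {(E, xs). real (deg n E (v0 n E)) \<le> g n \<and>
                       lost_within xs (v0 n E) (sqrt (real n * p n / real (deg n E (v0 n E))))}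
         \<le> measure_pmf.prob (gnp n (p n)) {E. \<exists>u v. u < v \<and> v < n \<and> E (u, v) \<and> real (deg n E u + deg n E v) \<le> x / 20} + \<epsilon> / 2"
        by (rule joint_bound[OF s _ x_def xpos gD del]) (use assms(6) np eps in auto)
      also have "\<dots> \<le> \<epsilon>" using bad by simp
      finally show "measure_pmf.prob
             (bind_pmf (gnp n (p n)) (\<lambda>E. map_pmf (\<lambda>xs. (E, xs)) (bd_traj n E s {v0 n E} T)))
             {(E, xs). real (deg n E (v0 n E)) \<le> g n \<and>
                       lost_within xs (v0 n E) (sqrt (real n * p n / real (deg n E (v0 n E))))} \<le> \<epsilon>" .
    qed
  qed
qed
end
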